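(* Let $G,H$ be locally compact second countable unimodular groups and $(\Omega,\mu)$ a $(G,H)$-coupling with associated maps $i\colon G\times Y\to\Omega$, $j\colon H\times X\to\Omega$. Then the associated cocycles $\omega_H\colon G\times X\to H$ and $\omega_G\colon H\times Y\to G$ are (essentially) locally bounded Borel maps.
   Context: A Borel map is locally bounded if it maps relatively compact sets to relatively compact sets. A $(G,H)$-coupling is a standard Borel measure space $(\Omega,\mu)$ (standard meaning: Borel isomorphic, via a map $\varphi$ with $\varphi,\varphi^{-1}$ locally bounded, onto a closed subset of $\mathbb{R}\sqcup\mathbb{Z}$ with $\varphi_*\mu$ equivalent to Lebesgue+counting measure on the range) with a locally bounded Borel action of $G\times H$, and measure preserving Borel isomorphisms $i\colon (G,\lambda_G)\times(Y,\mu_Y)\to\Omega$, $j\colon (H,\lambda_H)\times(X,\mu_X)\to\Omega$ with $X,Y$ standard and $0<\mu_X(X),\mu_Y(Y)<\infty$, such that $i,i^{-1},j,j^{-1}$ are locally bounded and essentially $G$- resp. $H$-equivariant ($i(g_0g,y)=g_0.i(g,y)$ for a.e. $y$ and all $g_0,g$; analogously for $j$). The induced $G$-action on $X$ is defined (a.e.) by $g.j(H\times\{x\})=j(H\times\{g.x\})$, and similarly $H$ acts on $Y$. The cocycle $\omega_H$ is defined by $g.j(h,x)=j(h\,\omega_H(g,x)^{-1},g.x)$ for a.e. $x\in X$ and all $h\in H$ (and set to the identity on a null set), and $\omega_G$ by $h.i(g,y)=i(g\,\omega_G(h,y)^{-1},h.y)$ for a.e. $y\in Y$ and all $g\in G$.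 *)

theory Defs
  imports "HOL-Analysis.Analysis"
begin

definition relcompact :: "'a::topological_space set \<Rightarrow> bool" where
  "relcompact A \<longleftrightarrow> compact (closure A)"

definition locally_bounded :: "('a::topological_space \<Rightarrow> 'b::topological_space) \<Rightarrow> bool" where
  "locally_bounded f \<longleftrightarrow> (\<forall>A. relcompact A \<longrightarrow> relcompact (f ` A))"

text \<open>Topology of the disjoint union: a set is closed iff its real part is closed
 (every subset of the discrete part Z is closed); it is relatively compact iff its
 real part is bounded and its integer part is finite.\<close>

definition RZ_closed :: "(real + int) set \<Rightarrow> bool" where
  "RZ_closed S \<longleftrightarrow> closed (Inl -` S)"

definition RZ_relcompact :: "(real + int) set \<Rightarrow> bool" where
  "RZ_relcompact A \<longleftrightarrow> bounded (Inl -` A) \<and> finite (Inr -` A)"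

definition RZ :: "(real + int) measure" where
  "RZ = measure_of UNIV {A. Inl -` A \<in> sets borel}
         (\<lambda>A. emeasure lborel (Inl -` A) + emeasure (count_space UNIV) (Inr -` A))"

definition standard_space :: "'a::topological_space measure \<Rightarrow> bool" where
  "standard_space M \<longleftrightarrow> sets M = sets borel \<and>
     (\<exists>(\<phi> :: 'a \<Rightarrow> real + int) \<psi> S. RZ_closed S \<and> (\<forall>w. \<phi> w \<in> S) \<and>
        (\<forall>w. \<psi> (\<phi> w) = w) \<and> (\<forall>s\<in>S. \<phi> (\<psi> s) = s) \<and>
        \<phi> \<in> M \<rightarrow>\<^sub>M RZ \<and> \<psi> \<in> restrict_space RZ S \<rightarrow>\<^sub>M M \<and>
        (\<forall>A. relcompact A \<longrightarrow> RZ_relcompact (\<phi> ` A)) \<and>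
        (\<forall>A. A \<subseteq> S \<longrightarrow> RZ_relcompact A \<longrightarrow> relcompact (\<psi> ` A)) \<and>
        (\<forall>A \<in> sets RZ. A \<subseteq> S \<longrightarrow> (emeasure M (\<phi> -` A) = 0 \<longleftrightarrow> emeasure RZ A = 0)))"

text \<open>Groups are written additively (class group_add is not assumed commutative).
 The group is a Hausdorff second countable topological group (type class) which is
 locally compact; lam is a Haar measure which is both left and right invariant
 (unimodularity).\<close>

definition unimodular_lcsc_group ::
  "'g::{topological_group_add, t2_space, second_countable_topology} measure \<Rightarrow> bool" where
  "unimodular_lcsc_group lam \<longleftrightarrow>
     locally_compact_space (euclidean :: 'g topology) \<and>
     sets lam = sets borel \<and>
     (\<forall>K. compact K \<longrightarrow> emeasure lam K < \<infinity>) \<and>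
     (\<forall>U. open U \<and> U \<noteq> {} \<longrightarrow> 0 < emeasure lam U) \<and>
     (\<forall>g A. A \<in> sets borel \<longrightarrow>
        emeasure lam ((\<lambda>x. g + x) ` A) = emeasure lam A \<and>
        emeasure lam ((\<lambda>x. x + g) ` A) = emeasure lam A)"

text \<open>act g h w is the action of (g,h) in G x H on Omega.\<close>

definition coupling ::
  "'g::topological_group_add measure \<Rightarrow> 'h::topological_group_add measure \<Rightarrow>
   'w::topological_space measure \<Rightarrow> ('g \<Rightarrow> 'h \<Rightarrow> 'w \<Rightarrow> 'w) \<Rightarrow>
   'x::topological_space measure \<Rightarrow> 'y::topological_space measure \<Rightarrow>
   ('g \<times> 'y \<Rightarrow> 'w) \<Rightarrow> ('h \<times> 'x \<Rightarrow> 'w) \<Rightarrow> bool" where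
  "coupling lamG lamH mu act muX muY i j \<longleftrightarrow>
     standard_space mu \<and> standard_space muX \<and> standard_space muY \<and>
     0 < emeasure muX (space muX) \<and> emeasure muX (space muX) < \<infinity> \<and>
     0 < emeasure muY (space muY) \<and> emeasure muY (space muY) < \<infinity> \<and>
     \<comment> \<open>locally bounded Borel action of G x H\<close>
     (\<forall>w. act 0 0 w = w) \<and>
     (\<forall>g1 g2 h1 h2 w. act (g1 + g2) (h1 + h2) w = act g1 h1 (act g2 h2 w)) \<and>
     (\<lambda>p. act (fst (fst p)) (snd (fst p)) (snd p)) \<in> ((borel \<Otimes>\<^sub>M borel) \<Otimes>\<^sub>M mu) \<rightarrow>\<^sub>M mu \<and>
     locally_bounded (\<lambda>p. act (fst (fst p)) (snd (fst p)) (snd p)) \<and>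
     \<comment> \<open>i : G x Y -> Omega\<close>
     bij i \<and> i \<in> (lamG \<Otimes>\<^sub>M muY) \<rightarrow>\<^sub>M mu \<and> inv i \<in> mu \<rightarrow>\<^sub>M (lamG \<Otimes>\<^sub>M muY) \<and>
     distr (lamG \<Otimes>\<^sub>M muY) mu i = mu \<and>
     locally_bounded i \<and> locally_bounded (inv i) \<and>
     (AE y in muY. \<forall>g0 g. i (g0 + g, y) = act g0 0 (i (g, y))) \<and>
     \<comment> \<open>j : H x X -> Omega\<close>
     bij j \<and> j \<in> (lamH \<Otimes>\<^sub>M muX) \<rightarrow>\<^sub>M mu \<and> inv j \<in> mu \<rightarrow>\<^sub>M (lamH \<Otimes>\<^sub>M muX) \<and>
     distr (lamH \<Otimes>\<^sub>M muX) mu j = mu \<and>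
     locally_bounded j \<and> locally_bounded (inv j) \<and>
     (AE x in muX. \<forall>h0 h. j (h0 + h, x) = act 0 h0 (j (h, x)))"

end

theory Submission
  imports Defs
begin

lemma rc_mono: "relcompact B \<Longrightarrow> A \<subseteq> B \<Longrightarrow> relcompact A"
  unfolding relcompact_def
  by (metis closed_closure closure_mono compact_Int_closed inf.absorb_iff2)

lemma rc_sub: "compact K \<Longrightarrow> closed K \<Longrightarrow> A \<subseteq> K \<Longrightarrow> relcompact A"
  unfolding relcompact_def
  by (metis closed_closure closure_minimal compact_Int_closed inf.absorb_iff2)

lemma closure_snd_sub:
  fixes A :: "('a::topological_space \<times> 'b::topological_space) set"
  assumes "relcompact A"
  shows "closure (snd ` A) \<subseteq> snd ` closure A"
proof
  fix y assume y: "y \<in> closure (snd ` A)"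
  show "y \<in> snd ` closure A"
  proof (rule ccontr)
    assume ny: "y \<notin> snd ` closure A"
    define W where "W = (\<lambda>(x::'b,g::'a). (g,x)) -` (- closure A)"
    have "continuous_on UNIV (\<lambda>(x::'b,g::'a). (g,x))"
      by (simp add: case_prod_unfold continuous_intros)
    then have oW: "open W" unfolding W_def by (intro open_vimage) auto
    have cK: "compact (fst ` closure A)"
      using assms unfolding relcompact_def by (intro compact_continuous_image continuous_intros)
    have "{y} \<times> fst ` closure A \<subseteq> W" using ny unfolding W_def by force
    from Elementary_Topology.tube_lemma[OF cK oW this] obtain X0 where X0: "y \<in> X0" "open X0" "X0 \<times> fst ` closure A \<subseteq> W"
      by blast
    have "X0 \<inter> snd ` A = {}"
    proof (rule ccontr)
      assume "X0 \<inter> snd ` A \<noteq> {}"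
      then obtain a where a: "a \<in> A" "snd a \<in> X0" by auto
      then have "(snd a, fst a) \<in> W" using X0(3) closure_subset by fastforce
      then show False using a closure_subset unfolding W_def by auto
    qed
    then have "X0 \<inter> closure (snd ` A) = {}" using X0(2) open_Int_closure_eq_empty by blast
    then show False using y X0(1) by blast
  qed
qed

lemma rc_snd:
  fixes A :: "('a::topological_space \<times> 'b::topological_space) set"
  assumes "relcompact A"
  shows "relcompact (snd ` A)"
proof -
  have "compact (snd ` closure A)"
    using assms unfolding relcompact_def by (intro compact_continuous_image continuous_intros)
  then show ?thesis unfolding relcompact_def
    using closure_snd_sub[OF assms]
    by (metis closed_closure compact_Int_closed inf.absorb_iff2)
qed

lemma key:
  fixes A :: "('a::topological_space \<times> 'x::topological_space) set"
    and j :: "'h::{zero,t2_space} \<times> 'x \<Rightarrow> 'w::topological_space"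
    and P :: "('b::t2_space \<times> 'w) \<Rightarrow> 'w"
    and Q :: "'w \<Rightarrow> ('h2::{topological_group_add,t2_space} \<times> 'x2::topological_space)"
    and e :: "'a \<Rightarrow> 'b"
  assumes A: "relcompact A" and lj: "locally_bounded j" and lP: "locally_bounded P"
    and lQ: "locally_bounded Q" and ce: "continuous_on UNIV e"
  shows "relcompact ((\<lambda>p. - fst (Q (P (e (fst p), j (0, snd p))))) ` A)"
proof -
  define C where "C = closure (snd ` A)"
  have cC: "compact C" using rc_snd[OF A] unfolding relcompact_def C_def .
  have "relcompact ({0::'h} \<times> C)"
    unfolding relcompact_def closure_Times C_def using cC C_def by (simp add: compact_Times)
  then have rD: "relcompact (j ` ({0} \<times> C))" using lj unfolding locally_bounded_def by blast
  define D where "D = closure (j ` ({0} \<times> C))"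
  have cD: "compact D" using rD unfolding D_def relcompact_def .
  define K where "K = closure A"
  have cK: "compact K" using A unfolding K_def relcompact_def .
  have cE: "compact (e ` fst ` K)"
    by (intro compact_continuous_image cK continuous_intros continuous_on_subset[OF ce]) auto
  define B where "B = (\<lambda>p. (e (fst p), j (0, snd p))) ` A"
  have "B \<subseteq> e ` fst ` K \<times> D"
  proof
    fix b assume "b \<in> B"
    then obtain a where a: "a \<in> A" "b = (e (fst a), j (0, snd a))" unfolding B_def by blast
    have "a \<in> K" using a(1) unfolding K_def by (rule closure_subset[THEN subsetD])
    then have 1: "e (fst a) \<in> e ` fst ` K" by blast
    have "snd a \<in> snd ` A" using a(1) by blast
    then have "snd a \<in> C" unfolding C_def by (rule closure_subset[THEN subsetD])
    then have "j (0, snd a) \<in> j ` ({0} \<times> C)" by blast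
    then have 2: "j (0, snd a) \<in> D" unfolding D_def by (rule closure_subset[THEN subsetD])
    show "b \<in> e ` fst ` K \<times> D" using 1 2 a(2) by simp
  qed
  moreover have "compact (e ` fst ` K \<times> D)" using cE cD by (simp add: compact_Times)
  moreover have "closed (e ` fst ` K \<times> D)" using cE unfolding D_def
    by (simp add: closed_Times compact_imp_closed)
  ultimately have rB: "relcompact B" by (rule rc_sub[rotated 2])
  then have "relcompact (P ` B)" using lP unfolding locally_bounded_def by blast
  then have "relcompact (Q ` P ` B)" using lQ unfolding locally_bounded_def by blast
  then have cF: "compact (closure (Q ` P ` B))" unfolding relcompact_def .
  define F where "F = uminus ` fst ` closure (Q ` P ` B)"
  have "compact F" unfolding F_def
    by (intro compact_continuous_image cF continuous_intros)
  moreover have "closed F" using \<open>compact F\<close> by (simp add: compact_imp_closed)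
  moreover have "(\<lambda>p. - fst (Q (P (e (fst p), j (0, snd p))))) ` A \<subseteq> F"
  proof
    fix z assume "z \<in> (\<lambda>p. - fst (Q (P (e (fst p), j (0, snd p))))) ` A"
    then obtain a where a: "a \<in> A" "z = - fst (Q (P (e (fst a), j (0, snd a))))" by blast
    have "(e (fst a), j (0, snd a)) \<in> B" using a(1) unfolding B_def by blast
    then have "Q (P (e (fst a), j (0, snd a))) \<in> Q ` P ` B" by blast
    then have "Q (P (e (fst a), j (0, snd a))) \<in> closure (Q ` P ` B)" by (rule closure_subset[THEN subsetD])
    then show "z \<in> F" unfolding F_def a(2) by blast
  qed
  ultimately show ?thesis by (rule rc_sub)
qed

lemma meas_key:
  fixes j :: "'h::{topological_group_add} \<times> 'x \<Rightarrow> 'w"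
    and e :: "'a::topological_space \<Rightarrow> 'b"
  assumes sH: "sets lamH = sets (borel::'h measure)"
    and mj: "j \<in> lamH \<Otimes>\<^sub>M muX \<rightarrow>\<^sub>M mu" and mQ: "Q \<in> mu \<rightarrow>\<^sub>M lamH \<Otimes>\<^sub>M muX2"
    and mP: "P \<in> N \<Otimes>\<^sub>M mu \<rightarrow>\<^sub>M mu" and me: "e \<in> borel \<rightarrow>\<^sub>M N"
  shows "(\<lambda>p. - fst (Q (P (e (fst p), j (0, snd p))))) \<in> borel_measurable (borel \<Otimes>\<^sub>M muX)"
proof -
  have "(\<lambda>p. (0::'h, snd p)) \<in> (borel::'a measure) \<Otimes>\<^sub>M muX \<rightarrow>\<^sub>M borel \<Otimes>\<^sub>M muX"
    by (intro measurable_Pair measurable_const measurable_snd) auto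
  then have m1: "(\<lambda>p. (0::'h, snd p)) \<in> (borel::'a measure) \<Otimes>\<^sub>M muX \<rightarrow>\<^sub>M lamH \<Otimes>\<^sub>M muX"
    using measurable_cong_sets[OF refl sets_pair_measure_cong[OF sH refl]] by blast
  have m2: "(\<lambda>p. j (0, snd p)) \<in> (borel::'a measure) \<Otimes>\<^sub>M muX \<rightarrow>\<^sub>M mu"
    using measurable_compose[OF m1 mj] by simp
  have m3: "(\<lambda>p. e (fst p)) \<in> (borel::'a measure) \<Otimes>\<^sub>M muX \<rightarrow>\<^sub>M N"
    by (rule measurable_compose[OF measurable_fst me])
  have m4: "(\<lambda>p. (e (fst p), j (0, snd p))) \<in> (borel::'a measure) \<Otimes>\<^sub>M muX \<rightarrow>\<^sub>M N \<Otimes>\<^sub>M mu"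
    using measurable_Pair[OF m3 m2] .
  have m5: "(\<lambda>p. Q (P (e (fst p), j (0, snd p)))) \<in> (borel::'a measure) \<Otimes>\<^sub>M muX \<rightarrow>\<^sub>M lamH \<Otimes>\<^sub>M muX2"
    using measurable_compose[OF measurable_compose[OF m4 mP] mQ] by simp
  have "fst \<in> lamH \<Otimes>\<^sub>M muX2 \<rightarrow>\<^sub>M lamH" by (rule measurable_fst)
  then have "fst \<in> lamH \<Otimes>\<^sub>M muX2 \<rightarrow>\<^sub>M (borel::'h measure)"
    using measurable_cong_sets[OF refl sH] by blast
  then have m6: "(\<lambda>p. fst (Q (P (e (fst p), j (0, snd p))))) \<in> borel_measurable ((borel::'a measure) \<Otimes>\<^sub>M muX)"
    using measurable_compose[OF m5] by blast
  have "(uminus::'h \<Rightarrow> 'h) \<in> borel_measurable borel"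
    by (intro borel_measurable_continuous_onI continuous_intros)
  from measurable_compose[OF m6 this] show ?thesis by simp
qed

theorem proposition3p9:
  fixes lamG :: "'g::{topological_group_add, t2_space, second_countable_topology} measure"
    and lamH :: "'h::{topological_group_add, t2_space, second_countable_topology} measure"
    and mu :: "'w::topological_space measure"
    and act :: "'g \<Rightarrow> 'h \<Rightarrow> 'w \<Rightarrow> 'w"
    and muX :: "'x::topological_space measure" and muY :: "'y::topological_space measure"
    and i :: "'g \<times> 'y \<Rightarrow> 'w" and j :: "'h \<times> 'x \<Rightarrow> 'w"
    and actX :: "'g \<Rightarrow> 'x \<Rightarrow> 'x" and actY :: "'h \<Rightarrow> 'y \<Rightarrow> 'y"
    and omegaH :: "'g \<Rightarrow> 'x \<Rightarrow> 'h" and omegaG :: "'h \<Rightarrow> 'y \<Rightarrow> 'g"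
  assumes "unimodular_lcsc_group lamG" and "unimodular_lcsc_group lamH"
    and "coupling lamG lamH mu act muX muY i j"
    and "AE x in muX. \<forall>g. act g 0 ` j ` (UNIV \<times> {x}) = j ` (UNIV \<times> {actX g x})"
    and "AE y in muY. \<forall>h. act 0 h ` i ` (UNIV \<times> {y}) = i ` (UNIV \<times> {actY h y})"
    and "AE x in muX. \<forall>g h. act g 0 (j (h, x)) = j (h - omegaH g x, actX g x)"
    and "AE y in muY. \<forall>h g. act 0 h (i (g, y)) = i (g - omegaG h y, actY h y)"
  shows "(\<exists>w'. (\<lambda>p. w' (fst p) (snd p)) \<in> borel_measurable (borel \<Otimes>\<^sub>M muX) \<and>
              locally_bounded (\<lambda>p. w' (fst p) (snd p)) \<and>
              (AE x in muX. \<forall>g. omegaH g x = w' g x)) \<and>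
         (\<exists>w'. (\<lambda>p. w' (fst p) (snd p)) \<in> borel_measurable (borel \<Otimes>\<^sub>M muY) \<and>
              locally_bounded (\<lambda>p. w' (fst p) (snd p)) \<and>
              (AE y in muY. \<forall>h. omegaG h y = w' h y))"

proof -
  note C = assms(3)[unfolded coupling_def]
  have lbj: "locally_bounded j" and lbij: "locally_bounded (inv j)" and bj: "bij j"
    and lbi: "locally_bounded i" and lbii: "locally_bounded (inv i)" and bi: "bij i"
    and lbP: "locally_bounded (\<lambda>p. act (fst (fst p)) (snd (fst p)) (snd p))"
    using C by auto
  define w1 where "w1 = (\<lambda>g x. - fst (inv j (act g 0 (j (0, x)))))"
  define w2 where "w2 = (\<lambda>h y. - fst (inv i (act 0 h (i (0, y)))))"
  have sG: "sets lamG = sets (borel::'g measure)" using assms(1) unfolding unimodular_lcsc_group_def by blast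
  have sH: "sets lamH = sets (borel::'h measure)" using assms(2) unfolding unimodular_lcsc_group_def by blast
  have mj: "j \<in> lamH \<Otimes>\<^sub>M muX \<rightarrow>\<^sub>M mu" and mij: "inv j \<in> mu \<rightarrow>\<^sub>M lamH \<Otimes>\<^sub>M muX"
    and mi: "i \<in> lamG \<Otimes>\<^sub>M muY \<rightarrow>\<^sub>M mu" and mii: "inv i \<in> mu \<rightarrow>\<^sub>M lamG \<Otimes>\<^sub>M muY"
    and mP: "(\<lambda>p. act (fst (fst p)) (snd (fst p)) (snd p)) \<in> ((borel \<Otimes>\<^sub>M borel) \<Otimes>\<^sub>M mu) \<rightarrow>\<^sub>M mu"
    using C by auto
  have e1: "(\<lambda>g::'g. (g, 0::'h)) \<in> borel \<rightarrow>\<^sub>M borel \<Otimes>\<^sub>M borel"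
    by (intro measurable_Pair measurable_const measurable_ident_sets) auto
  have e2: "(\<lambda>h::'h. (0::'g, h)) \<in> borel \<rightarrow>\<^sub>M borel \<Otimes>\<^sub>M borel"
    by (intro measurable_Pair measurable_const measurable_ident_sets) auto
  have "locally_bounded (\<lambda>p. w1 (fst p) (snd p))"
    unfolding locally_bounded_def w1_def
  proof (intro allI impI)
    fix A :: "('g \<times> 'x) set" assume "relcompact A"
    from key[OF this lbj lbP lbij, of "\<lambda>g. (g, 0::'h)"]
    show "relcompact ((\<lambda>p. - fst (inv j (act (fst p) 0 (j (0, snd p))))) ` A)"
      by (simp add: continuous_intros)
  qed
  moreover have "locally_bounded (\<lambda>p. w2 (fst p) (snd p))"
    unfolding locally_bounded_def w2_def
  proof (intro allI impI)
    fix A :: "('h \<times> 'y) set" assume "relcompact A"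
    from key[OF this lbi lbP lbii, of "\<lambda>h. (0::'g, h)"]
    show "relcompact ((\<lambda>p. - fst (inv i (act 0 (fst p) (i (0, snd p))))) ` A)"
      by (simp add: continuous_intros)
  qed
  moreover have "AE x in muX. \<forall>g. omegaH g x = w1 g x"
    using assms(6)
  proof eventually_elim
    case (elim x)
    show ?case
    proof
      fix g
      have "inv j (act g 0 (j (0, x))) = (- omegaH g x, actX g x)"
        using elim[rule_format, of g 0] bj by (simp add: bij_is_inj)
      then show "omegaH g x = w1 g x" unfolding w1_def by simp
    qed
  qed
  moreover have "AE y in muY. \<forall>h. omegaG h y = w2 h y"
    using assms(7)
  proof eventually_elim
    case (elim y)
    show ?case
    proof
      fix h
      have "inv i (act 0 h (i (0, y))) = (- omegaG h y, actY h y)"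
        using elim[rule_format, of h 0] bi by (simp add: bij_is_inj)
      then show "omegaG h y = w2 h y" unfolding w2_def by simp
    qed
  qed
  moreover have "(\<lambda>p. w1 (fst p) (snd p)) \<in> borel_measurable (borel \<Otimes>\<^sub>M muX)"
    using meas_key[OF sH mj mij mP e1] unfolding w1_def by simp
  moreover have "(\<lambda>p. w2 (fst p) (snd p)) \<in> borel_measurable (borel \<Otimes>\<^sub>M muY)"
    using meas_key[OF sG mi mii mP e2] unfolding w2_def by simp
  ultimately have F: "(\<lambda>p. w1 (fst p) (snd p)) \<in> borel_measurable (borel \<Otimes>\<^sub>M muX) \<and>
              locally_bounded (\<lambda>p. w1 (fst p) (snd p)) \<and>
              (AE x in muX. \<forall>g. omegaH g x = w1 g x)"
     "(\<lambda>p. w2 (fst p) (snd p)) \<in> borel_measurable (borel \<Otimes>\<^sub>M muY) \<and>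
              locally_bounded (\<lambda>p. w2 (fst p) (snd p)) \<and>
              (AE y in muY. \<forall>h. omegaG h y = w2 h y)" by simp_all
  show ?thesis
    apply (rule conjI)
     apply (rule exI[of _ w1], rule F(1))
    apply (rule exI[of _ w2], rule F(2))
    done
qed

end
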